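(* There exists $\ell_0\in\mathbb{N}$ such that for all integers $\ell\ge \ell_0$ the following holds. Let $\delta>0$ and let $m,k\in\mathbb{N}$ with $m\le 2^k$. Let $G$ be a digraph on $n=\ell m$ vertices with $\delta^0(G)\ge \delta n$. Then there exists a partition of $V(G)$ into sets $V_1,\dots,V_m$ such that, for all $i\in\{1,\dots,m\}$, $|V_i|=\ell$ and \[ \delta^0(G[V_i])\ \ge\ \Big(\delta-2\ell^{-1/3}\sum_{0\le j\le k-1}2^{-j/3}\Big)\ell\ \ge\ \big(\delta-10\ell^{-1/3}\big)\ell . \]
   Context: For a digraph $G$, $d^+(v)$ and $d^-(v)$ denote the out-degree and in-degree of a vertex $v$, and $\delta^0(G)=\min\{d^+(v),d^-(v):v\in V(G)\}$ is the minimum semi-degree. For $W\subseteq V(G)$, $G[W]$ is the subdigraph induced on $W$. *)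

theory Defs
  imports Complex_Main
begin

definition digraph :: "'a set \<Rightarrow> ('a \<times> 'a) set \<Rightarrow> bool" where
  "digraph V E \<longleftrightarrow> finite V \<and> E \<subseteq> V \<times> V \<and> (\<forall>v. (v, v) \<notin> E)"

definition out_deg :: "'a set \<Rightarrow> ('a \<times> 'a) set \<Rightarrow> 'a \<Rightarrow> nat" where
  "out_deg V E v = card {w \<in> V. (v, w) \<in> E}"

definition in_deg :: "'a set \<Rightarrow> ('a \<times> 'a) set \<Rightarrow> 'a \<Rightarrow> nat" where
  "in_deg V E v = card {w \<in> V. (w, v) \<in> E}"

definition min_semideg :: "'a set \<Rightarrow> ('a \<times> 'a) set \<Rightarrow> nat" where
  "min_semideg V E = Min ((\<lambda>v. min (out_deg V E v) (in_deg V E v)) ` V)"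

definition induced_arcs :: "('a \<times> 'a) set \<Rightarrow> 'a set \<Rightarrow> ('a \<times> 'a) set" where
  "induced_arcs E W = E \<inter> (W \<times> W)"

end

theory Submission
  imports Defs "HOL-Probability.Probability" "HOL-Real_Asymp.Real_Asymp"
begin


lemma prob_split:
  fixes U :: "'a set" and F :: "'a set set" and N r :: nat and \<epsilon> :: real
  assumes fin: "finite U" and N: "card U = N" and Npos: "N > 0" and r: "r \<le> N"
    and F: "finite F" "\<forall>X\<in>F. X \<subseteq> U"
    and bound: "real (card F) * (2 * exp (-2 * \<epsilon>^2 / N)) < 1" and eps: "\<epsilon> > 0"
  shows "\<exists>f. \<forall>X\<in>F. \<bar>real (card {x\<in>X. f x}) - real (card X) * (r/N)\<bar> < \<epsilon>"
proof (rule ccontr)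
  assume contra: "\<not> ?thesis"
  define p where "p = real r / real N"
  have p01: "p \<in> {0..1}" using r Npos by (auto simp: p_def)
  define M where "M = Pi_pmf U False (\<lambda>_. bernoulli_pmf p)"
  define Bad where "Bad (X::'a set) = {f. \<epsilon> \<le> \<bar>real (card {x\<in>X. f x}) - real (card X) * p\<bar>}" for X
  have bad_bound: "measure_pmf.prob M (Bad X) \<le> 2 * exp (-2 * \<epsilon>^2 / N)" if X: "X \<in> F" for X
  proof (cases "X = {}")
    case True
    then have "Bad X = {}" using eps by (auto simp: Bad_def)
    then show ?thesis by simp
  next
    case False
    have XU: "X \<subseteq> U" using F X by auto
    have finX: "finite X" using XU fin finite_subset by blast
    define n where "n = card X"
    have npos: "n > 0" using False finX by (auto simp: n_def)
    have nN: "n \<le> N" using card_mono[OF fin XU] N by (simp add: n_def)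
    have "binomial_pmf n p = map_pmf (\<lambda>f. card {x\<in>X. f x}) (Pi_pmf X False (\<lambda>_. bernoulli_pmf p))"
      by (rule binomial_pmf_altdef'[OF finX]) (use p01 n_def in auto)
    also have "Pi_pmf X False (\<lambda>_. bernoulli_pmf p) = map_pmf (\<lambda>f x. if x \<in> X then f x else False) M"
      unfolding M_def by (rule Pi_pmf_subset[OF fin XU])
    also have "map_pmf (\<lambda>f. card {x\<in>X. f x}) (map_pmf (\<lambda>f x. if x \<in> X then f x else False) M)
        = map_pmf (\<lambda>f. card {x\<in>X. f x}) M"
      by (simp add: pmf.map_comp o_def cong: conj_cong)
    finally have eq: "binomial_pmf n p = map_pmf (\<lambda>f. card {x\<in>X. f x}) M" .
    have "measure_pmf.prob M (Bad X) = measure_pmf.prob (binomial_pmf n p) {x. \<epsilon> \<le> \<bar>real x - real n * p\<bar>}"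
      unfolding eq by (simp add: Bad_def n_def vimage_def)
    also have "\<dots> \<le> 2 * exp (- 2 * \<epsilon>\<^sup>2 / real n)"
      by (rule binomial_distribution.prob_abs_ge) (use p01 npos eps in \<open>auto simp: binomial_distribution_def\<close>)
    also have "\<dots> \<le> 2 * exp (-2 * \<epsilon>^2 / N)"
      using npos nN eps by (simp add: frac_le)
    finally show ?thesis .
  qed
  have "measure_pmf.prob M (\<Union>X\<in>F. Bad X) \<le> (\<Sum>X\<in>F. measure_pmf.prob M (Bad X))"
    by (rule measure_pmf.finite_measure_subadditive_finite) (use F in auto)
  also have "\<dots> \<le> (\<Sum>X\<in>F. 2 * exp (-2 * \<epsilon>^2 / N))"
    by (rule sum_mono) (rule bad_bound)
  also have "\<dots> < 1" using bound by simp
  finally have lt: "measure_pmf.prob M (\<Union>X\<in>F. Bad X) < 1" .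
  have "(\<Union>X\<in>F. Bad X) = UNIV"
    using contra by (auto simp: Bad_def p_def not_less)
  then show False using lt by simp
qed


lemma adjust:
  assumes fin: "finite U" and A': "A' \<subseteq> U" and r: "r \<le> card U"
  shows "\<exists>A\<subseteq>U. card A = r \<and>
    (\<forall>X. \<bar>real (card (X \<inter> A)) - real (card (X \<inter> A'))\<bar> \<le> \<bar>real (card A') - real r\<bar>)"
proof (cases "r \<le> card A'")
  case True
  have finA': "finite A'" using fin A' finite_subset by blast
  obtain A where A: "A \<subseteq> A'" "card A = r" using obtain_subset_with_card_n[OF True] by blast
  have finA: "finite A" using A finA' finite_subset by blast
  have dev: "\<bar>real (card (X \<inter> A)) - real (card (X \<inter> A'))\<bar> \<le> \<bar>real (card A') - real r\<bar>" for X
  proof -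
    have c1: "card (X \<inter> A) \<le> card (X \<inter> A')" using A finA' by (intro card_mono) auto
    have "X \<inter> A' \<subseteq> (X \<inter> A) \<union> (A' - A)" by auto
    then have "card (X \<inter> A') \<le> card ((X \<inter> A) \<union> (A' - A))" using finA' finA by (intro card_mono) auto
    also have "\<dots> \<le> card (X \<inter> A) + card (A' - A)" by (rule card_Un_le)
    also have "card (A' - A) = card A' - r" using A finA' by (simp add: card_Diff_subset finite_subset)
    finally show ?thesis using c1 True by linarith
  qed
  show ?thesis
  proof (intro exI[of _ A] conjI allI)
    show "A \<subseteq> U" using A A' by blast
  qed (use A dev in auto)
next
  case False
  have finA': "finite A'" using fin A' finite_subset by blast
  have "r - card A' \<le> card (U - A')" using r A' finA' by (simp add: card_Diff_subset)
  then obtain C where C: "C \<subseteq> U - A'" "card C = r - card A'" by (rule obtain_subset_with_card_n)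
  have finC: "finite C" using C fin finite_subset by blast
  define A where "A = A' \<union> C"
  have cardA: "card A = r" unfolding A_def using C False finA' finC
    by (subst card_Un_disjoint) auto
  have dev: "\<bar>real (card (X \<inter> A)) - real (card (X \<inter> A'))\<bar> \<le> \<bar>real (card A') - real r\<bar>" for X
  proof -
    have c1: "card (X \<inter> A') \<le> card (X \<inter> A)" using finA' finC unfolding A_def by (intro card_mono) auto
    have "X \<inter> A \<subseteq> (X \<inter> A') \<union> C" unfolding A_def by auto
    then have "card (X \<inter> A) \<le> card ((X \<inter> A') \<union> C)" using finA' finC by (intro card_mono) auto
    also have "\<dots> \<le> card (X \<inter> A') + card C" by (rule card_Un_le)
    finally show ?thesis using c1 C False by linarith
  qed
  have "A \<subseteq> U" using A' C unfolding A_def by auto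
  show ?thesis
    by (intro exI[of _ A] conjI allI) (fact, fact, rule dev)
qed

lemma split_det:
  fixes U :: "'a set" and F :: "'a set set" and N r :: nat and \<epsilon> :: real
  assumes fin: "finite U" and N: "card U = N" and Npos: "N > 0" and r: "r \<le> N"
    and F: "finite F" "\<forall>X\<in>F. X \<subseteq> U"
    and bound: "(real (card F) + 1) * (2 * exp (-2 * \<epsilon>^2 / N)) < 1" and eps: "\<epsilon> > 0"
  shows "\<exists>A\<subseteq>U. card A = r \<and> (\<forall>X\<in>F. \<bar>real (card (X \<inter> A)) - real (card X) * (r/N)\<bar> \<le> 2 * \<epsilon>)"
proof -
  have "card (insert U F) \<le> Suc (card F)" by (simp add: card_insert_if F(1))
  then have ci: "real (card (insert U F)) \<le> real (card F) + 1" by simp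
  have "real (card (insert U F)) * (2 * exp (-2 * \<epsilon>^2 / N)) \<le> (real (card F) + 1) * (2 * exp (-2 * \<epsilon>^2 / N))"
    by (rule mult_right_mono[OF ci]) simp
  then have b2: "real (card (insert U F)) * (2 * exp (-2 * \<epsilon>^2 / N)) < 1"
    using bound by linarith
  have F2: "finite (insert U F)" "\<forall>X\<in>insert U F. X \<subseteq> U" using F by auto
  obtain f where f: "\<forall>X\<in>insert U F. \<bar>real (card {x\<in>X. f x}) - real (card X) * (r/N)\<bar> < \<epsilon>"
    using prob_split[OF fin N Npos r F2 b2 eps] by blast
  define A' where "A' = {x\<in>U. f x}"
  have A'U: "A' \<subseteq> U" by (auto simp: A'_def)
  have "\<bar>real (card A') - real r\<bar> < \<epsilon>" using f N Npos by (auto simp: A'_def)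
  moreover obtain A where A: "A \<subseteq> U" "card A = r"
    "\<forall>X. \<bar>real (card (X \<inter> A)) - real (card (X \<inter> A'))\<bar> \<le> \<bar>real (card A') - real r\<bar>"
    using adjust[OF fin A'U] r N by blast
  moreover have "\<forall>X\<in>F. \<bar>real (card (X \<inter> A')) - real (card X) * (r/N)\<bar> < \<epsilon>"
  proof
    fix X assume X: "X \<in> F"
    then have "X \<inter> A' = {x\<in>X. f x}" using F A'_def by auto
    then show "\<bar>real (card (X \<inter> A')) - real (card X) * (r/N)\<bar> < \<epsilon>" using f X by auto
  qed
  ultimately have fin_b: "\<forall>X\<in>F. \<bar>real (card (X \<inter> A)) - real (card X) * (r/N)\<bar> \<le> 2 * \<epsilon>"
  proof (intro ballI)
    fix X assume X: "X \<in> F"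
    assume h1: "\<bar>real (card A') - real r\<bar> < \<epsilon>" and h2: "\<forall>X. \<bar>real (card (X \<inter> A)) - real (card (X \<inter> A'))\<bar> \<le> \<bar>real (card A') - real r\<bar>"
      and h3: "\<forall>X\<in>F. \<bar>real (card (X \<inter> A')) - real (card X) * (r/N)\<bar> < \<epsilon>"
    have "\<bar>real (card (X \<inter> A)) - real (card (X \<inter> A'))\<bar> < \<epsilon>" using h1 h2 by (meson order_le_less_trans)
    moreover have "\<bar>real (card (X \<inter> A')) - real (card X) * (r/N)\<bar> < \<epsilon>" using h3 X by blast
    ultimately show "\<bar>real (card (X \<inter> A)) - real (card X) * (r/N)\<bar> \<le> 2 * \<epsilon>" by linarith
  qed
  show ?thesis using A(1,2) fin_b by blast
qed




definition goodset :: "('a \<times> 'a) set \<Rightarrow> 'a set \<Rightarrow> real \<Rightarrow> bool" where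
  "goodset E W c \<longleftrightarrow> (\<forall>v\<in>W. c \<le> real (card {w\<in>W. (v,w)\<in>E}) \<and> c \<le> real (card {w\<in>W. (w,v)\<in>E}))"

lemma goodset_mono: "c' \<le> c \<Longrightarrow> goodset E W c \<Longrightarrow> goodset E W c'"
  unfolding goodset_def by force

lemma numeric: "\<exists>N0::nat. \<forall>N\<ge>N0. (4*real N+2)*exp(-2*real N powr(1/3)/9) < 1"
proof -
  have "(\<lambda>n::nat. (4*real n+2)*exp(-2*real n powr (1/3)/9)) \<longlonglongrightarrow> 0"
    by real_asymp
  then have "eventually (\<lambda>n. (4*real n+2)*exp(-2*real n powr (1/3)/9) < 1) sequentially"
    by (rule order_tendstoD) simp
  then show ?thesis by (simp add: eventually_sequentially)
qed

lemma eps_id: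
  fixes N :: real assumes "N > 0"
  shows "-2 * (N powr (2/3) / 3)^2 / N = -2 * N powr (1/3) / 9"
proof -
  have "(N powr (2/3))^2 = N powr (4/3)"
    using assms by (simp add: power2_eq_square flip: powr_add)
  also have "N powr (4/3) = N powr (1/3 + 1)" by simp
  also have "\<dots> = N powr (1/3) * N powr 1" by (rule powr_add)
  also have "\<dots> = N powr (1/3) * N" using assms by simp
  finally show ?thesis using assms by (simp add: field_simps power_divide)
qed

lemma ineq:
  fixes l t b d :: nat
  assumes l: "l \<ge> 1" and t: "2^d < t" and b: "t \<le> 3*b"
  shows "2/3 * (real t * real l) powr (2/3) \<le> 2 * real l powr (-1/3) * 2 powr (-real d/3) * (real b * real l)"
proof -
  have tpos: "real t > 0" using t by simp
  have lpos: "real l > 0" using l by simp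
  have t2: "(2::real)^d \<le> real t"
  proof -
    have "2^d \<le> t" using t by simp
    then have "real (2^d) \<le> real t" by (rule of_nat_mono)
    then show ?thesis by simp
  qed
  have "(2::real) powr (-real d/3) = (2 powr real d) powr (-1/3)"
    by (simp add: powr_powr)
  also have "(2::real) powr real d = 2^d" by (rule powr_realpow) simp
  also have "(2^d :: real) powr (-1/3) \<ge> real t powr (-1/3)"
    by (rule powr_mono2'[OF _ _ t2]) simp_all
  finally have h1: "2 powr (-real d/3) \<ge> real t powr (-1/3)" .
  have h2: "real t / 3 * real l \<le> real b * real l"
  proof -
    have "real t \<le> 3 * real b" using b by (metis of_nat_mono of_nat_mult of_nat_numeral)
    then have "real t / 3 \<le> real b" by simp
    then show ?thesis using lpos by (intro mult_right_mono) auto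
  qed
  have h3: "2 * real l powr (-1/3) * real t powr (-1/3) \<le> 2 * real l powr (-1/3) * 2 powr (-real d/3)"
    by (rule mult_left_mono[OF h1]) simp
  have M: "2 * real l powr (-1/3) * real t powr (-1/3) * (real t / 3 * real l)
      \<le> 2 * real l powr (-1/3) * 2 powr (-real d/3) * (real b * real l)"
    by (rule mult_mono[OF h3 h2]) (use tpos lpos in simp_all)
  have E1: "2 * real l powr (-1/3) * real t powr (-1/3) * (real t / 3 * real l)
      = 2/3 * (real l powr (-1/3) * real l) * (real t powr (-1/3) * real t)" by (simp add: field_simps)
  have E2: "real l powr (-1/3) * real l = real l powr (2/3)"
  proof -
    have "real l powr (-1/3) * real l = real l powr (-1/3) * real l powr 1" using lpos by simp
    also have "\<dots> = real l powr (-1/3 + 1)" by (rule powr_add[symmetric])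
    also have "(-1/3 + 1::real) = 2/3" by simp
    finally show ?thesis .
  qed
  have E3: "real t powr (-1/3) * real t = real t powr (2/3)"
  proof -
    have "real t powr (-1/3) * real t = real t powr (-1/3) * real t powr 1" using tpos by simp
    also have "\<dots> = real t powr (-1/3 + 1)" by (rule powr_add[symmetric])
    also have "(-1/3 + 1::real) = 2/3" by simp
    finally show ?thesis .
  qed
  have E4: "real l powr (2/3) * real t powr (2/3) = (real t * real l) powr (2/3)"
    using lpos tpos by (simp add: powr_mult)
  have "2/3 * (real t * real l) powr (2/3) = 2/3 * (real l powr (-1/3) * real l) * (real t powr (-1/3) * real t)"
    unfolding E2 E3 E4[symmetric] by (simp add: mult.assoc)
  also have "\<dots> = 2 * real l powr (-1/3) * real t powr (-1/3) * (real t / 3 * real l)"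
    by (rule E1[symmetric])
  also have "\<dots> \<le> 2 * real l powr (-1/3) * 2 powr (-real d/3) * (real b * real l)" by (rule M)
  finally show ?thesis .
qed

lemma arithA:
  fixes cx cxa \<gamma> \<eta> a t l e :: real
  assumes "t > 0" "l > 0" "a \<ge> 0" "cx \<ge> \<gamma>*(t*l)" "\<bar>cxa - cx*((a*l)/(t*l))\<bar> \<le> e" "e \<le> \<eta>*(a*l)"
  shows "cxa \<ge> (\<gamma>-\<eta>)*(a*l)"
proof -
  have e1: "cx*((a*l)/(t*l)) = cx*a/t" using assms by simp
  have "cx*a/t \<ge> \<gamma>*(t*l)*a/t" using assms by (intro divide_right_mono mult_right_mono) auto
  also have "\<gamma>*(t*l)*a/t = \<gamma>*(a*l)" using assms by (simp add: field_simps)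
  finally show ?thesis using assms e1 by (simp add: algebra_simps abs_le_iff)
qed

lemma arithB:
  fixes cx cxa \<gamma> \<eta> a b t l e :: real
  assumes "t > 0" "l > 0" "b \<ge> 0" "a + b = t" "cx \<ge> \<gamma>*(t*l)" "\<bar>cxa - cx*((a*l)/(t*l))\<bar> \<le> e" "e \<le> \<eta>*(b*l)"
  shows "cx - cxa \<ge> (\<gamma>-\<eta>)*(b*l)"
proof -
  have e0: "cx*((a*l)/(t*l)) = cx*a/t" using assms by simp
  have "cx - cx*a/t = cx*(t-a)/t" using assms by (simp add: field_simps)
  then have e1: "cx - cx*((a*l)/(t*l)) = cx*b/t" using assms e0 by simp
  have "cx*b/t \<ge> \<gamma>*(t*l)*b/t" using assms by (intro divide_right_mono mult_right_mono) auto
  also have "\<gamma>*(t*l)*b/t = \<gamma>*(b*l)" using assms by (simp add: field_simps)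
  finally show ?thesis using assms e1 by (simp add: algebra_simps abs_le_iff)
qed




lemma graph_split:
  fixes E :: "('a \<times> 'a) set" and U :: "'a set" and l t d N0 :: nat and \<gamma> :: real
  assumes N0: "\<forall>N\<ge>N0. (4*real N+2)*exp(-2*real N powr(1/3)/9) < 1"
    and l: "l \<ge> 1" "l \<ge> N0" and t: "2^d < t"
    and fin: "finite U" and cardU: "card U = t*l" and good: "goodset E U (\<gamma> * (real t * real l))"
  shows "\<exists>A B. A \<union> B = U \<and> A \<inter> B = {} \<and> card A = ((t+1) div 2) * l \<and> card B = (t div 2) * l \<and>
     goodset E A ((\<gamma> - 2 * real l powr (-1/3) * 2 powr (-real d/3)) * (real ((t+1) div 2) * real l)) \<and>
     goodset E B ((\<gamma> - 2 * real l powr (-1/3) * 2 powr (-real d/3)) * (real (t div 2) * real l))"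
proof -
  define a where "a = (t+1) div 2"
  define b where "b = t div 2"
  define \<eta> where "\<eta> = 2 * real l powr (-1/3) * 2 powr (-real d/3)"
  define N where "N = t*l"
  have t2: "t \<ge> 2" using t by (metis Suc_leI le_trans one_le_numeral one_le_power One_nat_def le_add_same_cancel1 Suc_1 not_less linorder_not_le)
  have ab: "a + b = t" by (simp add: a_def b_def)
  have b3: "t \<le> 3*b" using t2 by (simp add: b_def)
  have ba: "b \<le> a" by (simp add: a_def b_def)
  have b1: "b \<ge> 1" using t2 by (simp add: b_def)
  have Npos: "N > 0" using t2 l by (simp add: N_def)
  have "l \<le> t*l" using t2 by simp
  then have NN0: "N \<ge> N0" using l(2) unfolding N_def by linarith
  define Fo where "Fo = (\<lambda>v. {w\<in>U. (v,w)\<in>E}) ` U"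
  define Fi where "Fi = (\<lambda>v. {w\<in>U. (w,v)\<in>E}) ` U"
  define F where "F = Fo \<union> Fi"
  have finF: "finite F" using fin by (simp add: F_def Fo_def Fi_def)
  have FU: "\<forall>X\<in>F. X \<subseteq> U" by (auto simp: F_def Fo_def Fi_def)
  have "card F \<le> card Fo + card Fi" unfolding F_def by (rule card_Un_le)
  also have "card Fo \<le> card U" unfolding Fo_def by (rule card_image_le[OF fin])
  also have "card Fi \<le> card U" unfolding Fi_def by (rule card_image_le[OF fin])
  finally have cF: "card F \<le> 2*N" using cardU by (simp add: N_def)
  define \<epsilon> where "\<epsilon> = real N powr (2/3) / 3"
  have epos: "\<epsilon> > 0" using Npos by (simp add: \<epsilon>_def)
  have "(real (card F) + 1) * (2 * exp (-2 * \<epsilon>^2 / N)) \<le> (2 * real N + 1) * (2 * exp (-2 * \<epsilon>^2 / N))"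
    using cF by (intro mult_right_mono) auto
  also have "\<dots> = (4 * real N + 2) * exp (-2 * real N powr (1/3) / 9)"
  proof -
    have "-2 * \<epsilon>^2 / N = -2 * real N powr (1/3) / 9"
      unfolding \<epsilon>_def by (rule eps_id) (use Npos in simp)
    then show ?thesis by (simp only:) (simp add: algebra_simps)
  qed
  also have "\<dots> < 1" using N0 NN0 by blast
  finally have bound: "(real (card F) + 1) * (2 * exp (-2 * \<epsilon>^2 / N)) < 1" .
  have rN: "a*l \<le> N" using ab by (simp add: N_def)
  obtain A where A: "A \<subseteq> U" "card A = a*l"
    and dev: "\<forall>X\<in>F. \<bar>real (card (X \<inter> A)) - real (card X) * (real (a*l)/real N)\<bar> \<le> 2 * \<epsilon>"
    using split_det[OF fin _ Npos rN finF FU bound epos] cardU N_def by blast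
  define B where "B = U - A"
  have finA: "finite A" using A fin finite_subset by blast
  have cardB: "card B = b*l" using A fin cardU ab unfolding B_def
    by (simp add: card_Diff_subset finite_subset) (metis add_diff_cancel_left' add_mult_distrib)
  have e_b: "2 * \<epsilon> \<le> \<eta> * (real b * real l)"
    using ineq[OF l(1) t b3] Npos by (simp add: \<epsilon>_def \<eta>_def N_def)
  have e_a: "2 * \<epsilon> \<le> \<eta> * (real a * real l)"
  proof -
    have "\<eta> \<ge> 0" by (simp add: \<eta>_def)
    moreover have "real b * real l \<le> real a * real l" using ba by (intro mult_right_mono) auto
    ultimately show ?thesis using e_b by (meson mult_left_mono order_trans)
  qed
  have tpos: "real t > 0" and lpos: "real l > 0" using t2 l by auto
  have ratio: "real (a*l) / real N = (real a * real l) / (real t * real l)" by (simp add: N_def)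
  have abr: "real a + real b = real t" using ab by (metis of_nat_add)
  have boundA: "(\<gamma> - \<eta>) * (real a * real l) \<le> real (card (X \<inter> A))"
    and boundB: "(\<gamma> - \<eta>) * (real b * real l) \<le> real (card (X - X \<inter> A))"
    if X: "X \<in> F" and Xg: "\<gamma> * (real t * real l) \<le> real (card X)" for X
  proof -
    have d: "\<bar>real (card (X \<inter> A)) - real (card X) * ((real a * real l) / (real t * real l))\<bar> \<le> 2 * \<epsilon>"
    proof -
      have "\<bar>real (card (X \<inter> A)) - real (card X) * (real (a*l)/real N)\<bar> \<le> 2 * \<epsilon>" using dev X by blast
      then show ?thesis unfolding ratio .
    qed
    show "(\<gamma> - \<eta>) * (real a * real l) \<le> real (card (X \<inter> A))"
      by (rule arithA[OF tpos lpos _ Xg d e_a]) simp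
    have finX: "finite X" using X FU fin finite_subset by blast
    have "real (card (X - X \<inter> A)) = real (card X) - real (card (X \<inter> A))"
      using finX by (simp add: card_Diff_subset of_nat_diff card_mono)
    moreover have "(\<gamma> - \<eta>) * (real b * real l) \<le> real (card X) - real (card (X \<inter> A))"
      by (rule arithB[OF tpos lpos _ abr Xg d e_b]) simp
    ultimately show "(\<gamma> - \<eta>) * (real b * real l) \<le> real (card (X - X \<inter> A))" by simp
  qed
  have goodA: "goodset E A ((\<gamma> - \<eta>) * (real a * real l))"
    unfolding goodset_def
  proof
    fix v assume v: "v \<in> A"
    then have vU: "v \<in> U" using A by auto
    have Xo: "{w\<in>U. (v,w)\<in>E} \<in> F" using vU by (auto simp: F_def Fo_def)
    have Xi: "{w\<in>U. (w,v)\<in>E} \<in> F" using vU by (auto simp: F_def Fi_def)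
    have go: "\<gamma> * (real t * real l) \<le> real (card {w\<in>U. (v,w)\<in>E})"
      and gi: "\<gamma> * (real t * real l) \<le> real (card {w\<in>U. (w,v)\<in>E})"
      using good vU by (auto simp: goodset_def)
    have "{w\<in>A. (v,w)\<in>E} = {w\<in>U. (v,w)\<in>E} \<inter> A" "{w\<in>A. (w,v)\<in>E} = {w\<in>U. (w,v)\<in>E} \<inter> A"
      using A by auto
    then show "(\<gamma> - \<eta>) * (real a * real l) \<le> real (card {w\<in>A. (v,w)\<in>E}) \<and>
               (\<gamma> - \<eta>) * (real a * real l) \<le> real (card {w\<in>A. (w,v)\<in>E})"
      using boundA[OF Xo go] boundA[OF Xi gi] by simp
  qed
  have goodB: "goodset E B ((\<gamma> - \<eta>) * (real b * real l))"
    unfolding goodset_def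
  proof
    fix v assume v: "v \<in> B"
    then have vU: "v \<in> U" by (auto simp: B_def)
    have Xo: "{w\<in>U. (v,w)\<in>E} \<in> F" using vU by (auto simp: F_def Fo_def)
    have Xi: "{w\<in>U. (w,v)\<in>E} \<in> F" using vU by (auto simp: F_def Fi_def)
    have go: "\<gamma> * (real t * real l) \<le> real (card {w\<in>U. (v,w)\<in>E})"
      and gi: "\<gamma> * (real t * real l) \<le> real (card {w\<in>U. (w,v)\<in>E})"
      using good vU by (auto simp: goodset_def)
    have "{w\<in>B. (v,w)\<in>E} = {w\<in>U. (v,w)\<in>E} - {w\<in>U. (v,w)\<in>E} \<inter> A"
         "{w\<in>B. (w,v)\<in>E} = {w\<in>U. (w,v)\<in>E} - {w\<in>U. (w,v)\<in>E} \<inter> A"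
      by (auto simp: B_def)
    then show "(\<gamma> - \<eta>) * (real b * real l) \<le> real (card {w\<in>B. (v,w)\<in>E}) \<and>
               (\<gamma> - \<eta>) * (real b * real l) \<le> real (card {w\<in>B. (w,v)\<in>E})"
      using boundB[OF Xo go] boundB[OF Xi gi] by simp
  qed
  have "A \<union> B = U" "A \<inter> B = {}" using A by (auto simp: B_def)
  then show ?thesis using A(2) cardB goodA goodB unfolding a_def b_def \<eta>_def by blast
qed




lemma claim:
  fixes E :: "('a \<times> 'a) set" and l N0 :: nat
  assumes N0: "\<forall>N\<ge>N0. (4*real N+2)*exp(-2*real N powr(1/3)/9) < 1"
    and l: "l \<ge> 1" "l \<ge> N0"
  shows "\<forall>t U \<gamma>. t \<le> 2^d \<longrightarrow> finite U \<longrightarrow> card U = t*l \<longrightarrow> goodset E U (\<gamma> * (real t * real l)) \<longrightarrow>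
    (\<exists>P. (\<Union>i\<in>{1..t}. P i) = U \<and> (\<forall>i\<in>{1..t}. \<forall>j\<in>{1..t}. i \<noteq> j \<longrightarrow> P i \<inter> P j = {}) \<and>
      (\<forall>i\<in>{1..t}. card (P i) = l \<and>
        goodset E (P i) ((\<gamma> - 2 * real l powr (-1/3) * (\<Sum>j<d. 2 powr (- real j / 3))) * real l)))"
proof (induction d)
  case 0
  show ?case
  proof (intro allI impI)
    fix t U \<gamma> assume t: "t \<le> 2^0" and fin: "finite U" and c: "card U = t*l"
      and g: "goodset E U (\<gamma> * (real t * real l))"
    show "\<exists>P. (\<Union>i\<in>{1..t}. P i) = U \<and> (\<forall>i\<in>{1..t}. \<forall>j\<in>{1..t}. i \<noteq> j \<longrightarrow> P i \<inter> P j = {}) \<and>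
      (\<forall>i\<in>{1..t}. card (P i) = l \<and>
        goodset E (P i) ((\<gamma> - 2 * real l powr (-1/3) * (\<Sum>j<0. 2 powr (- real j / 3))) * real l))"
    proof (cases "t = 0")
      case True
      then have "U = {}" using c fin by simp
      then show ?thesis using True by (intro exI[of _ "\<lambda>_. {}"]) auto
    next
      case False
      then have t1: "t = 1" using t by simp
      show ?thesis using t1 c g by (intro exI[of _ "\<lambda>_. U"]) auto
    qed
  qed
next
  case (Suc d)
  define S where "S d' = 2 * real l powr (-1/3) * (\<Sum>j<d'. 2 powr (- real j / 3))" for d'
  define \<eta> where "\<eta> = 2 * real l powr (-1/3) * 2 powr (-real d/3)"
  have SSuc: "S (Suc d) = S d + \<eta>" by (simp add: S_def \<eta>_def algebra_simps)
  have eta0: "\<eta> \<ge> 0" by (simp add: \<eta>_def)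
  have IH: "(\<exists>P. (\<Union>i\<in>{1..t}. P i) = U \<and> (\<forall>i\<in>{1..t}. \<forall>j\<in>{1..t}. i \<noteq> j \<longrightarrow> P i \<inter> P j = {}) \<and>
      (\<forall>i\<in>{1..t}. card (P i) = l \<and> goodset E (P i) ((\<gamma> - S d) * real l)))"
    if "t \<le> 2^d" "finite U" "card U = t*l" "goodset E U (\<gamma> * (real t * real l))" for t U \<gamma>
    unfolding S_def by (rule Suc.IH[rule_format, OF that])
  show ?case unfolding S_def[symmetric]
  proof (intro allI impI)
    fix t U \<gamma> assume t: "t \<le> 2^Suc d" and fin: "finite U" and c: "card U = t*l"
      and g: "goodset E U (\<gamma> * (real t * real l))"
    show "\<exists>P. (\<Union>i\<in>{1..t}. P i) = U \<and> (\<forall>i\<in>{1..t}. \<forall>j\<in>{1..t}. i \<noteq> j \<longrightarrow> P i \<inter> P j = {}) \<and>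
      (\<forall>i\<in>{1..t}. card (P i) = l \<and> goodset E (P i) ((\<gamma> - S (Suc d)) * real l))"
    proof (cases "t \<le> 2^d")
      case True
      obtain P where P: "(\<Union>i\<in>{1..t}. P i) = U" "\<forall>i\<in>{1..t}. \<forall>j\<in>{1..t}. i \<noteq> j \<longrightarrow> P i \<inter> P j = {}"
        "\<forall>i\<in>{1..t}. card (P i) = l \<and> goodset E (P i) ((\<gamma> - S d) * real l)"
        using IH[OF True fin c g] by blast
      have le: "(\<gamma> - S (Suc d)) * real l \<le> (\<gamma> - S d) * real l"
        using SSuc eta0 by (intro mult_right_mono) auto
      have "\<forall>i\<in>{1..t}. card (P i) = l \<and> goodset E (P i) ((\<gamma> - S (Suc d)) * real l)"
        using P(3) goodset_mono[OF le] by blast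
      then show ?thesis using P(1,2) by blast
    next
      case False
      then have t': "2^d < t" by simp
      define a where "a = (t+1) div 2"
      define b where "b = t div 2"
      have ab: "a + b = t" by (simp add: a_def b_def)
      have hM: "(t+1) div 2 \<le> M" "t div 2 \<le> M" if "t \<le> 2*M" for M using that by presburger+
      have "t \<le> 2*2^d" using t by simp
      then have a_le: "a \<le> 2^d" and b_le: "b \<le> 2^d" using hM unfolding a_def b_def by blast+
      obtain A B where AB: "A \<union> B = U" "A \<inter> B = {}" "card A = a * l" "card B = b * l"
        "goodset E A ((\<gamma> - \<eta>) * (real a * real l))" "goodset E B ((\<gamma> - \<eta>) * (real b * real l))"
        using graph_split[OF N0 l t' fin c g] unfolding a_def b_def \<eta>_def by blast
      have finA: "finite A" and finB: "finite B" using AB fin by auto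
      obtain PA where PA: "(\<Union>i\<in>{1..a}. PA i) = A" "\<forall>i\<in>{1..a}. \<forall>j\<in>{1..a}. i \<noteq> j \<longrightarrow> PA i \<inter> PA j = {}"
        "\<forall>i\<in>{1..a}. card (PA i) = l \<and> goodset E (PA i) ((\<gamma> - \<eta> - S d) * real l)"
        using IH[OF a_le finA AB(3) AB(5)] by blast
      obtain PB where PB: "(\<Union>i\<in>{1..b}. PB i) = B" "\<forall>i\<in>{1..b}. \<forall>j\<in>{1..b}. i \<noteq> j \<longrightarrow> PB i \<inter> PB j = {}"
        "\<forall>i\<in>{1..b}. card (PB i) = l \<and> goodset E (PB i) ((\<gamma> - \<eta> - S d) * real l)"
        using IH[OF b_le finB AB(4) AB(6)] by blast
      have eqS: "\<gamma> - \<eta> - S d = \<gamma> - S (Suc d)" using SSuc by simp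
      define P where "P i = (if i \<le> a then PA i else PB (i - a))" for i
      have PAsub: "PA i \<subseteq> A" if "i \<in> {1..a}" for i using PA(1) that by blast
      have PBsub: "PB i \<subseteq> B" if "i \<in> {1..b}" for i using PB(1) that by blast
      have U1: "(\<Union>i\<in>{1..t}. P i) = U"
      proof
        show "(\<Union>i\<in>{1..t}. P i) \<subseteq> U"
        proof
          fix x assume "x \<in> (\<Union>i\<in>{1..t}. P i)"
          then obtain i where i: "i \<in> {1..t}" "x \<in> P i" by blast
          show "x \<in> U"
          proof (cases "i \<le> a")
            case True
            then show ?thesis using i PAsub AB(1) by (auto simp: P_def)
          next
            case False
            then have "i - a \<in> {1..b}" using i ab by auto
            then show ?thesis using i False PBsub AB(1) by (auto simp: P_def)
          qed
        qed
        show "U \<subseteq> (\<Union>i\<in>{1..t}. P i)"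
        proof
          fix x assume "x \<in> U"
          then have "x \<in> A \<or> x \<in> B" using AB(1) by blast
          then show "x \<in> (\<Union>i\<in>{1..t}. P i)"
          proof
            assume "x \<in> A"
            then obtain i where i: "i \<in> {1..a}" "x \<in> PA i" using PA(1) by blast
            then have "i \<in> {1..t}" "P i = PA i" using ab by (auto simp: P_def)
            then show ?thesis using i by blast
          next
            assume "x \<in> B"
            then obtain i where i: "i \<in> {1..b}" "x \<in> PB i" using PB(1) by blast
            then have "i + a \<in> {1..t}" "P (i + a) = PB i" using ab by (auto simp: P_def)
            then show ?thesis using i by blast
          qed
        qed
      qed
      have D: "\<forall>i\<in>{1..t}. \<forall>j\<in>{1..t}. i \<noteq> j \<longrightarrow> P i \<inter> P j = {}"
      proof (intro ballI impI)
        fix i j assume i: "i \<in> {1..t}" and j: "j \<in> {1..t}" and ij: "i \<noteq> j"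
        show "P i \<inter> P j = {}"
        proof (cases "i \<le> a"; cases "j \<le> a")
          assume "i \<le> a" "j \<le> a"
          then show ?thesis using PA(2) i j ij by (auto simp: P_def)
        next
          assume "i \<le> a" "\<not> j \<le> a"
          then have "i \<in> {1..a}" "j - a \<in> {1..b}" using i j ab by auto
          then show ?thesis using \<open>i \<le> a\<close> \<open>\<not> j \<le> a\<close> PAsub PBsub AB(2) unfolding P_def by fastforce
        next
          assume "\<not> i \<le> a" "j \<le> a"
          then have "j \<in> {1..a}" "i - a \<in> {1..b}" using i j ab by auto
          then show ?thesis using \<open>j \<le> a\<close> \<open>\<not> i \<le> a\<close> PAsub PBsub AB(2) unfolding P_def by fastforce
        next
          assume "\<not> i \<le> a" "\<not> j \<le> a"
          then have "i - a \<in> {1..b}" "j - a \<in> {1..b}" "i - a \<noteq> j - a" using i j ab ij by auto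
          then show ?thesis using PB(2) \<open>\<not> i \<le> a\<close> \<open>\<not> j \<le> a\<close> by (auto simp: P_def)
        qed
      qed
      have C: "\<forall>i\<in>{1..t}. card (P i) = l \<and> goodset E (P i) ((\<gamma> - S (Suc d)) * real l)"
      proof
        fix i assume i: "i \<in> {1..t}"
        show "card (P i) = l \<and> goodset E (P i) ((\<gamma> - S (Suc d)) * real l)"
        proof (cases "i \<le> a")
          case True
          then have "i \<in> {1..a}" using i by auto
          then show ?thesis using PA(3) True eqS by (auto simp: P_def)
        next
          case False
          then have "i - a \<in> {1..b}" using i ab by auto
          then show ?thesis using PB(3) False eqS by (auto simp: P_def)
        qed
      qed
      show ?thesis using U1 D C by blast
    qed
  qed
qed




lemma geom5: "(\<Sum>j<k. (2::real) powr (- real j / 3)) \<le> 5"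
proof -
  define r :: real where "r = 2 powr (-1/3)"
  have rpos: "r > 0" by (simp add: r_def)
  have r3: "r^3 = 1/2"
  proof -
    have "r^3 = r powr real 3" using rpos by (simp add: powr_realpow)
    also have "\<dots> = 2 powr (-1/3 * 3)" by (simp add: r_def powr_powr)
    also have "\<dots> = 1/2" by (simp add: powr_minus)
    finally show ?thesis .
  qed
  have r45: "r \<le> 4/5"
  proof (rule ccontr)
    assume "\<not> r \<le> 4/5"
    then have "(4/5::real)^3 < r^3" by (intro power_strict_mono) auto
    moreover have "(4/5::real)^3 = 64/125" by (simp add: power3_eq_cube)
    ultimately show False using r3 by linarith
  qed
  have eq: "(2::real) powr (- real j / 3) = r^j" for j
  proof -
    have "r^j = r powr real j" using rpos by (simp add: powr_realpow)
    also have "\<dots> = 2 powr (-1/3 * real j)" by (simp add: r_def powr_powr)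
    finally show ?thesis by simp
  qed
  have "(\<Sum>j<k. (2::real) powr (- real j / 3)) = (\<Sum>j<k. r^j)"
    by (intro sum.cong refl eq)
  also have "(\<Sum>j<k. r^j) = (1 - r^k) / (1 - r)"
    using r45 by (simp add: geometric_sum[of r k] field_simps)
  also have "\<dots> \<le> 1 / (1 - r)" using rpos r45 by (intro divide_right_mono) auto
  also have "\<dots> \<le> 5" using r45 by (simp add: field_simps)
  finally show ?thesis .
qed

lemma semideg_good:
  assumes fin: "finite W" and ne: "W \<noteq> {}" and g: "goodset E W c"
  shows "c \<le> real (min_semideg W (induced_arcs E W))"
proof -
  let ?f = "\<lambda>v. min (out_deg W (induced_arcs E W) v) (in_deg W (induced_arcs E W) v)"
  have "min_semideg W (induced_arcs E W) \<in> ?f ` W"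
    unfolding min_semideg_def using fin ne by (intro Min_in) auto
  then obtain v where v: "v \<in> W" "min_semideg W (induced_arcs E W) = ?f v" by auto
  have "{w\<in>W. (v,w) \<in> induced_arcs E W} = {w\<in>W. (v,w)\<in>E}"
       "{w\<in>W. (w,v) \<in> induced_arcs E W} = {w\<in>W. (w,v)\<in>E}"
    using v by (auto simp: induced_arcs_def)
  then have "?f v = min (card {w\<in>W. (v,w)\<in>E}) (card {w\<in>W. (w,v)\<in>E})"
    by (simp add: out_deg_def in_deg_def)
  then show ?thesis using v g unfolding goodset_def by (simp add: min_def)
qed

lemma good_from_semideg:
  assumes dg: "digraph V E" and ms: "x \<le> real (min_semideg V E)"
  shows "goodset E V x"
  unfolding goodset_def
proof
  fix v assume v: "v \<in> V"
  have fin: "finite V" using dg by (simp add: digraph_def)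
  have "min_semideg V E \<le> min (out_deg V E v) (in_deg V E v)"
    unfolding min_semideg_def using fin v by (intro Min_le) auto
  then show "x \<le> real (card {w\<in>V. (v,w)\<in>E}) \<and> x \<le> real (card {w\<in>V. (w,v)\<in>E})"
    using ms by (simp add: out_deg_def in_deg_def)
qed

theorem lemma2p1:
  shows "\<exists>l0::nat. \<forall>l::nat. l \<ge> l0 \<longrightarrow>
    (\<forall>(\<delta>::real) (m::nat) (k::nat) (V::nat set) (E::(nat \<times> nat) set).
      \<delta> > 0 \<longrightarrow> m \<le> 2 ^ k \<longrightarrow> digraph V E \<longrightarrow> card V = l * m \<longrightarrow>
      real (min_semideg V E) \<ge> \<delta> * real (card V) \<longrightarrow>
      (\<exists>P :: nat \<Rightarrow> nat set.
          (\<Union>i\<in>{1..m}. P i) = V \<and>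
          (\<forall>i\<in>{1..m}. \<forall>j\<in>{1..m}. i \<noteq> j \<longrightarrow> P i \<inter> P j = {}) \<and>
          (\<forall>i\<in>{1..m}. card (P i) = l \<and>
             real (min_semideg (P i) (induced_arcs E (P i)))
               \<ge> (\<delta> - 2 * real l powr (-1/3) * (\<Sum>j<k. 2 powr (- real j / 3))) * real l \<and>
             (\<delta> - 2 * real l powr (-1/3) * (\<Sum>j<k. 2 powr (- real j / 3))) * real l
               \<ge> (\<delta> - 10 * real l powr (-1/3)) * real l)))"
proof -
  obtain N0 :: nat where N0: "\<forall>N\<ge>N0. (4*real N+2)*exp(-2*real N powr(1/3)/9) < 1"
    using numeric by blast
  show ?thesis
  proof (intro exI[of _ "max 1 N0"] allI impI)
    fix l :: nat and \<delta> :: real and m k :: nat and V :: "nat set" and E :: "(nat \<times> nat) set"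
    assume l: "max 1 N0 \<le> l" and "\<delta> > 0" and mk: "m \<le> 2^k" and dg: "digraph V E"
      and cV: "card V = l * m" and ms: "\<delta> * real (card V) \<le> real (min_semideg V E)"
    have l1: "l \<ge> 1" and lN: "l \<ge> N0" using l by auto
    have fin: "finite V" using dg by (simp add: digraph_def)
    have g: "goodset E V (\<delta> * (real m * real l))"
      by (rule good_from_semideg[OF dg]) (use ms cV in \<open>simp add: mult.commute\<close>)
    have cV': "card V = m * l" using cV by simp
    obtain P where P: "(\<Union>i\<in>{1..m}. P i) = V" "\<forall>i\<in>{1..m}. \<forall>j\<in>{1..m}. i \<noteq> j \<longrightarrow> P i \<inter> P j = {}"
      "\<forall>i\<in>{1..m}. card (P i) = l \<and>
        goodset E (P i) ((\<delta> - 2 * real l powr (-1/3) * (\<Sum>j<k. 2 powr (- real j / 3))) * real l)"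
      using claim[OF N0 l1 lN, of k E, rule_format, OF mk fin cV' g] by blast
    have last: "(\<delta> - 2 * real l powr (-1/3) * (\<Sum>j<k. 2 powr (- real j / 3))) * real l
               \<ge> (\<delta> - 10 * real l powr (-1/3)) * real l"
    proof (intro mult_right_mono)
      have "2 * real l powr (-1/3) * (\<Sum>j<k. 2 powr (- real j / 3)) \<le> 2 * real l powr (-1/3) * 5"
        by (intro mult_left_mono geom5) simp
      then show "\<delta> - 10 * real l powr (-1/3) \<le> \<delta> - 2 * real l powr (-1/3) * (\<Sum>j<k. 2 powr (- real j / 3))"
        by simp
    qed simp
    have "\<forall>i\<in>{1..m}. card (P i) = l \<and>
             real (min_semideg (P i) (induced_arcs E (P i)))
               \<ge> (\<delta> - 2 * real l powr (-1/3) * (\<Sum>j<k. 2 powr (- real j / 3))) * real l"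
    proof
      fix i assume i: "i \<in> {1..m}"
      have c: "card (P i) = l" using P(3) i by blast
      have gi: "goodset E (P i) ((\<delta> - 2 * real l powr (-1/3) * (\<Sum>j<k. 2 powr (- real j / 3))) * real l)"
        using P(3) i by blast
      have finP: "finite (P i)" by (rule card_ge_0_finite) (use c l1 in simp)
      have neP: "P i \<noteq> {}" using c l1 by auto
      show "card (P i) = l \<and>
             real (min_semideg (P i) (induced_arcs E (P i)))
               \<ge> (\<delta> - 2 * real l powr (-1/3) * (\<Sum>j<k. 2 powr (- real j / 3))) * real l"
        using c semideg_good[OF finP neP gi] by blast
    qed
    then show "\<exists>P :: nat \<Rightarrow> nat set.
          (\<Union>i\<in>{1..m}. P i) = V \<and>
          (\<forall>i\<in>{1..m}. \<forall>j\<in>{1..m}. i \<noteq> j \<longrightarrow> P i \<inter> P j = {}) \<and>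
          (\<forall>i\<in>{1..m}. card (P i) = l \<and>
             real (min_semideg (P i) (induced_arcs E (P i)))
               \<ge> (\<delta> - 2 * real l powr (-1/3) * (\<Sum>j<k. 2 powr (- real j / 3))) * real l \<and>
             (\<delta> - 2 * real l powr (-1/3) * (\<Sum>j<k. 2 powr (- real j / 3))) * real l
               \<ge> (\<delta> - 10 * real l powr (-1/3)) * real l)"
      using P(1,2) last by blast
  qed
qed


end
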